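(* Let $k$ be a field of characteristic $p>0$ and $A$ an infinite-dimensional $k$-vector space. For every $r\ge0$, $S_{\le r}A\neq SA$.
   Context: $SA=\bigoplus_{m\ge0}S^mA$ is the symmetric algebra of $A$ ($S^0A=k$, $S^mA$ the $m$-th symmetric power, with pure symmetric tensors $a_1\otimes_s\dots\otimes_s a_m$). The linear map $\partial\colon SA\to SA\otimes A$ is given by $\partial(\lambda)=0$ for $\lambda\in S^0A$ and $\partial(a_1\otimes_s\dots\otimes_s a_m)=\sum_{i=1}^m(a_1\otimes_s\dots\otimes_s a_{i-1}\otimes_s a_{i+1}\otimes_s\dots\otimes_s a_m)\otimes a_i$. Iterates: $\partial^0=1_{SA}$ and $\partial^{r+1}:=\partial;(\partial^r\otimes 1_A)\colon SA\to SA\otimes A^{\otimes(r+1)}$. Define $S_{\le r}A:=\ker(\partial^{r+1})\subseteq SA$. *)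

theory Defs
  imports Main "HOL-Library.Poly_Mapping"
begin

(* The infinite-dimensional k-vector space A is taken with a basis
indexed by the (infinite) type 'i, i.e. A = 'i \<Rightarrow>\<^sub>0 'k.
Then S^m A has basis the monomials of degree m, so
SA = ('i \<Rightarrow>\<^sub>0 nat) \<Rightarrow>\<^sub>0 'k (exponent vector alpha stands for
e_{i1} \<otimes>_s ... \<otimes>_s e_{im} with multiplicities alpha), and
SA \<otimes> A^{\<otimes>n} has basis pairs (alpha, [i1,...,in]);
we represent it by ((('i \<Rightarrow>\<^sub>0 nat) \<times> 'i list) \<Rightarrow>\<^sub>0 'k), words of length n. *)

type_synonym ('i, 'k) SA = "('i \<Rightarrow>\<^sub>0 nat) \<Rightarrow>\<^sub>0 'k"
type_synonym ('i, 'k) SAT = "(('i \<Rightarrow>\<^sub>0 nat) \<times> 'i list) \<Rightarrow>\<^sub>0 'k"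

(* The map partial on a basis monomial: removing one factor e_i (which occurs alpha i times)
and putting it in the A slot. *)
definition partial_mono :: "('i \<Rightarrow>\<^sub>0 nat) \<Rightarrow> ('i, 'k::field) SAT" where
  "partial_mono \<alpha> =
     (\<Sum>i\<in>Poly_Mapping.keys \<alpha>. Poly_Mapping.single (\<alpha> - Poly_Mapping.single i 1, [i]) (of_nat (Poly_Mapping.lookup \<alpha> i)))"

definition partial :: "('i, 'k::field) SA \<Rightarrow> ('i, 'k) SAT" where
  "partial s = (\<Sum>\<alpha>\<in>Poly_Mapping.keys s. Poly_Mapping.map ((*) (Poly_Mapping.lookup s \<alpha>)) (partial_mono \<alpha>))"

definition append_factor :: "'i \<Rightarrow> ('i, 'k::field) SAT \<Rightarrow> ('i, 'k) SAT" where
  "append_factor i t = (\<Sum>(\<beta>, w)\<in>Poly_Mapping.keys t. Poly_Mapping.single (\<beta>, w @ [i]) (Poly_Mapping.lookup t (\<beta>, w)))"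

(* Given linear f : SA \<rightarrow> SA \<otimes> A^{\<otimes>r}, the map f \<otimes> 1_A : SA \<otimes> A \<rightarrow> SA \<otimes> A^{\<otimes>(r+1)}. *)
definition tensor_id :: "(('i, 'k::field) SA \<Rightarrow> ('i, 'k) SAT) \<Rightarrow> ('i, 'k) SAT \<Rightarrow> ('i, 'k) SAT" where
  "tensor_id f t = (\<Sum>(\<alpha>, w)\<in>Poly_Mapping.keys t.
      (case w of [i] \<Rightarrow> Poly_Mapping.map ((*) (Poly_Mapping.lookup t (\<alpha>, w))) (append_factor i (f (Poly_Mapping.single \<alpha> 1))) | _ \<Rightarrow> 0))"

definition embed0 :: "('i, 'k::field) SA \<Rightarrow> ('i, 'k) SAT" where
  "embed0 s = (\<Sum>\<alpha>\<in>Poly_Mapping.keys s. Poly_Mapping.single (\<alpha>, []) (Poly_Mapping.lookup s \<alpha>))"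

fun partial_pow :: "nat \<Rightarrow> ('i, 'k::field) SA \<Rightarrow> ('i, 'k) SAT" where
  "partial_pow 0 = embed0"
| "partial_pow (Suc r) = (\<lambda>s. tensor_id (partial_pow r) (partial s))"

definition S_le :: "nat \<Rightarrow> ('i, 'k::field) SA set" where
  "S_le r = {s. partial_pow (Suc r) s = 0}"

end

theory Submission
  imports Defs
begin

lemma map_mult1: "Poly_Mapping.map ((*) (1::'a::field)) p = p"
  by transfer (auto simp: fun_eq_iff when_def)

lemma lookup_sum_single_inj:
  assumes "finite S" "inj_on g S" "x \<in> S"
  shows "Poly_Mapping.lookup (\<Sum>y\<in>S. Poly_Mapping.single (g y) (c y)) (g x) = c x"
proof -
  have "Poly_Mapping.lookup (\<Sum>y\<in>S. Poly_Mapping.single (g y) (c y)) (g x) = (\<Sum>y\<in>S. (c y when g y = g x))"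
    by (simp add: Poly_Mapping.lookup_sum Poly_Mapping.lookup_single)
  also have "\<dots> = (\<Sum>y\<in>S. (if y = x then c y else 0))"
    using assms by (intro sum.cong) (auto simp: when_def inj_on_def)
  also have "\<dots> = c x" using assms by simp
  finally show ?thesis .
qed

lemma keys_sum_single_inj:
  assumes "finite S" "inj_on g S" "\<And>x. x \<in> S \<Longrightarrow> c x \<noteq> 0"
  shows "Poly_Mapping.keys (\<Sum>y\<in>S. Poly_Mapping.single (g y) (c y)) = g ` S"
proof
  show "Poly_Mapping.keys (\<Sum>y\<in>S. Poly_Mapping.single (g y) (c y)) \<subseteq> g ` S"
    using Poly_Mapping.keys_sum[of "\<lambda>y. Poly_Mapping.single (g y) (c y)" S] by auto
  show "g ` S \<subseteq> Poly_Mapping.keys (\<Sum>y\<in>S. Poly_Mapping.single (g y) (c y))"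
    using lookup_sum_single_inj[OF assms(1,2), where c=c] assms(3) by (force simp: in_keys_iff)
qed

lemma sum_keys_inj:
  assumes "finite S" "inj_on g S" "\<And>x. x \<in> S \<Longrightarrow> c x \<noteq> 0"
    and "t = (\<Sum>y\<in>S. Poly_Mapping.single (g y) (c y))"
  shows "(\<Sum>k\<in>Poly_Mapping.keys t. F k (Poly_Mapping.lookup t k)) = (\<Sum>x\<in>S. F (g x) (c x))"
proof -
  have "(\<Sum>k\<in>Poly_Mapping.keys t. F k (Poly_Mapping.lookup t k)) = (\<Sum>x\<in>S. F (g x) (Poly_Mapping.lookup t (g x)))"
    using keys_sum_single_inj[OF assms(1-3)] assms(2,4) by (simp add: sum.reindex)
  also have "\<dots> = (\<Sum>x\<in>S. F (g x) (c x))"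
    using lookup_sum_single_inj[OF assms(1,2), where c=c] assms(4) by (intro sum.cong) auto
  finally show ?thesis .
qed

definition mp :: "'i list \<Rightarrow> 'i \<Rightarrow>\<^sub>0 nat" where
  "mp w = sum_list (map (\<lambda>j. Poly_Mapping.single j 1) w)"

definition W :: "nat \<Rightarrow> ('i \<Rightarrow>\<^sub>0 nat) \<Rightarrow> 'i list set" where
  "W n \<beta> = {w. length w = n \<and> distinct w \<and> set w \<subseteq> Poly_Mapping.keys \<beta>}"

lemma finite_W: "finite (W n \<beta>)"
  unfolding W_def by (rule finite_subset[OF _ finite_lists_length_eq[OF finite_keys, of \<beta> n]]) auto

lemma inj_W: "inj_on (\<lambda>w. (\<beta> - mp w, w)) S"
  by (auto simp: inj_on_def)

lemma partial_single:
  assumes "\<And>j. Poly_Mapping.lookup \<beta> j \<le> 1"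
  shows "partial (Poly_Mapping.single \<beta> (1::'k::field)) =
     (\<Sum>i\<in>Poly_Mapping.keys \<beta>. Poly_Mapping.single (\<beta> - Poly_Mapping.single i 1, [i]) 1)"
proof -
  have "partial (Poly_Mapping.single \<beta> (1::'k)) = partial_mono \<beta>"
    by (simp add: partial_def map_mult1)
  also have "\<dots> = (\<Sum>i\<in>Poly_Mapping.keys \<beta>. Poly_Mapping.single (\<beta> - Poly_Mapping.single i 1, [i]) 1)"
    unfolding partial_mono_def
  proof (intro sum.cong refl)
    fix i assume "i \<in> Poly_Mapping.keys \<beta>"
    then have "Poly_Mapping.lookup \<beta> i = 1" using assms[of i] by (auto simp: in_keys_iff)
    then show "Poly_Mapping.single (\<beta> - Poly_Mapping.single i 1, [i]) (of_nat (Poly_Mapping.lookup \<beta> i)) =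
      Poly_Mapping.single (\<beta> - Poly_Mapping.single i 1, [i]) (1::'k)" by simp
  qed
  finally show ?thesis .
qed


lemma tensor_id_eq: "tensor_id f t = (\<Sum>k\<in>Poly_Mapping.keys t. (case k of (\<alpha>, w) \<Rightarrow>
      (case w of [i] \<Rightarrow> Poly_Mapping.map ((*) (Poly_Mapping.lookup t k)) (append_factor i (f (Poly_Mapping.single \<alpha> 1))) | _ \<Rightarrow> 0)))"
  unfolding tensor_id_def by (intro sum.cong) auto

lemma append_factor_eq: "append_factor i t = (\<Sum>k\<in>Poly_Mapping.keys t. (case k of (\<beta>, w) \<Rightarrow>
      Poly_Mapping.single (\<beta>, w @ [i]) (Poly_Mapping.lookup t k)))"
  unfolding append_factor_def by (intro sum.cong) auto

lemma append_factor_W: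
  "append_factor i (\<Sum>w\<in>W n \<gamma>. Poly_Mapping.single (\<gamma> - mp w, w) (1::'k::field))
    = (\<Sum>w\<in>W n \<gamma>. Poly_Mapping.single (\<gamma> - mp w, w @ [i]) 1)"
  unfolding append_factor_eq
  by (subst sum_keys_inj[OF finite_W inj_W, where c = "\<lambda>_. 1"]) auto

lemma mp_snoc: "mp (w @ [i]) = mp w + Poly_Mapping.single i 1"
  by (simp add: mp_def)

lemma keys_minus_single:
  assumes "\<And>j. Poly_Mapping.lookup \<beta> j \<le> (1::nat)"
  shows "Poly_Mapping.keys (\<beta> - Poly_Mapping.single i 1) = Poly_Mapping.keys \<beta> - {i}"
proof -
  have H: "Poly_Mapping.lookup (\<beta> - Poly_Mapping.single i 1) j \<noteq> 0 \<longleftrightarrow> Poly_Mapping.lookup \<beta> j \<noteq> 0 \<and> j \<noteq> i" for j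
  proof (cases "j = i")
    case True
    have "Poly_Mapping.lookup (\<beta> - Poly_Mapping.single i 1) j = Poly_Mapping.lookup \<beta> i - 1"
      using True by (simp add: lookup_minus)
    also have "\<dots> = 0" using assms[of i] by linarith
    finally show ?thesis using True by simp
  next
    case False
    have "Poly_Mapping.lookup (\<beta> - Poly_Mapping.single i 1) j = Poly_Mapping.lookup \<beta> j"
      using False by (simp add: lookup_minus lookup_single_not_eq)
    then show ?thesis using False by simp
  qed
  show ?thesis by (rule set_eqI) (simp only: in_keys_iff Diff_iff singleton_iff H)
qed

lemma sqfree_minus:
  assumes "\<And>j. Poly_Mapping.lookup \<beta> j \<le> (1::nat)"
  shows "Poly_Mapping.lookup (\<beta> - Poly_Mapping.single i 1) j \<le> 1"
proof -
  have "Poly_Mapping.lookup (\<beta> - Poly_Mapping.single i 1) j \<le> Poly_Mapping.lookup \<beta> j"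
    by (simp add: lookup_minus)
  then show ?thesis using assms[of j] by linarith
qed

lemma bij_snoc:
  assumes "\<And>j. Poly_Mapping.lookup \<beta> j \<le> 1"
  shows "bij_betw (\<lambda>(i, w). w @ [i]) (SIGMA i:Poly_Mapping.keys \<beta>. W n (\<beta> - Poly_Mapping.single i 1)) (W (Suc n) \<beta>)"
proof (rule bij_betw_byWitness[where f' = "\<lambda>v. (last v, butlast v)"])
  show "\<forall>a\<in>(SIGMA i:Poly_Mapping.keys \<beta>. W n (\<beta> - Poly_Mapping.single i 1)). (last ((\<lambda>(i, w). w @ [i]) a), butlast ((\<lambda>(i, w). w @ [i]) a)) = a"
    by auto
  show "\<forall>a'\<in>W (Suc n) \<beta>. (\<lambda>(i, w). w @ [i]) (last a', butlast a') = a'"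
    by (auto simp: W_def) (metis append_butlast_last_id length_0_conv nat.distinct(1))
  show "(\<lambda>(i, w). w @ [i]) ` (SIGMA i:Poly_Mapping.keys \<beta>. W n (\<beta> - Poly_Mapping.single i 1)) \<subseteq> W (Suc n) \<beta>"
    using keys_minus_single[OF assms] by (auto simp: W_def)
  show "(\<lambda>v. (last v, butlast v)) ` W (Suc n) \<beta> \<subseteq> (SIGMA i:Poly_Mapping.keys \<beta>. W n (\<beta> - Poly_Mapping.single i 1))"
  proof safe
    fix v assume v: "v \<in> W (Suc n) \<beta>"
    then have ne: "v \<noteq> []" by (auto simp: W_def)
    have d: "distinct (butlast v @ [last v])" "set (butlast v @ [last v]) \<subseteq> Poly_Mapping.keys \<beta>"
      using v ne by (auto simp: W_def append_butlast_last_id)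
    show "last v \<in> Poly_Mapping.keys \<beta>" using d by auto
    show "butlast v \<in> W n (\<beta> - Poly_Mapping.single (last v) 1)"
      using d v keys_minus_single[OF assms] by (auto simp: W_def)
  qed
qed

lemma pp_formula:
  assumes "\<And>j. Poly_Mapping.lookup \<beta> j \<le> 1"
  shows "partial_pow n (Poly_Mapping.single \<beta> (1::'k::field)) = (\<Sum>w\<in>W n \<beta>. Poly_Mapping.single (\<beta> - mp w, w) 1)"
  using assms
proof (induction n arbitrary: \<beta>)
  case 0
  have "W 0 \<beta> = {[]}" by (auto simp: W_def)
  then show ?case by (simp add: embed0_def mp_def)
next
  case (Suc n)
  let ?T = "(\<Sum>i\<in>Poly_Mapping.keys \<beta>. Poly_Mapping.single (\<beta> - Poly_Mapping.single i 1, [i]) (1::'k))"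
  have "partial_pow (Suc n) (Poly_Mapping.single \<beta> (1::'k)) = tensor_id (partial_pow n) ?T"
    by (simp only: partial_pow.simps partial_single[OF Suc.prems])
  also have "\<dots> = (\<Sum>i\<in>Poly_Mapping.keys \<beta>. append_factor i (partial_pow n (Poly_Mapping.single (\<beta> - Poly_Mapping.single i 1) 1)))"
    unfolding tensor_id_eq
    by (subst sum_keys_inj[OF finite_keys, where g = "\<lambda>i. (\<beta> - Poly_Mapping.single i 1, [i])" and c = "\<lambda>_. 1"])
       (auto simp: inj_on_def map_mult1)
  also have "\<dots> = (\<Sum>i\<in>Poly_Mapping.keys \<beta>. \<Sum>w\<in>W n (\<beta> - Poly_Mapping.single i 1).
       Poly_Mapping.single (\<beta> - Poly_Mapping.single i 1 - mp w, w @ [i]) 1)"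
    using Suc.IH[OF sqfree_minus[OF Suc.prems]] by (simp add: append_factor_W)
  also have "\<dots> = (\<Sum>(i,w)\<in>(SIGMA i:Poly_Mapping.keys \<beta>. W n (\<beta> - Poly_Mapping.single i 1)).
       Poly_Mapping.single (\<beta> - mp ((\<lambda>(i, w). w @ [i]) (i,w)), (\<lambda>(i, w). w @ [i]) (i,w)) 1)"
    by (subst sum.Sigma) (auto simp: finite_W mp_snoc diff_diff_add add.commute)
  also have "\<dots> = (\<Sum>w\<in>W (Suc n) \<beta>. Poly_Mapping.single (\<beta> - mp w, w) 1)"
    using sum.reindex_bij_betw[OF bij_snoc[OF Suc.prems, of n], of "\<lambda>w. Poly_Mapping.single (\<beta> - mp w, w) (1::'k)"]
    by (simp add: case_prod_beta split_def)
  finally show ?case .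
qed


theorem proposition7p8:
  fixes p :: nat and r :: nat
  assumes "CHAR('k::field) = p" and "p > 0"
    and "infinite (UNIV :: 'i set)"
  shows "S_le r \<noteq> (UNIV :: ('i, 'k) SA set)"
proof -
  obtain I :: "'i set" where I: "finite I" "card I = Suc r"
    using infinite_arbitrarily_large[OF assms(3)] by blast
  define \<beta> :: "'i \<Rightarrow>\<^sub>0 nat" where "\<beta> = (\<Sum>j\<in>I. Poly_Mapping.single (id j) 1)"
  have kb: "Poly_Mapping.keys \<beta> = I"
    unfolding \<beta>_def using keys_sum_single_inj[OF I(1), of id "\<lambda>_. (1::nat)"] by simp
  have lb: "Poly_Mapping.lookup \<beta> j \<le> 1" for j
  proof (cases "j \<in> I")
    case True
    then show ?thesis unfolding \<beta>_def using lookup_sum_single_inj[OF I(1), of id j "\<lambda>_. (1::nat)"] by simp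
  next
    case False
    then have "Poly_Mapping.lookup \<beta> j = 0" using kb by (metis in_keys_iff)
    then show ?thesis by simp
  qed
  obtain w where w: "set w = I" "distinct w" using finite_distinct_list[OF I(1)] by blast
  have wW: "w \<in> W (Suc r) \<beta>"
    using w I kb distinct_card[OF w(2)] by (auto simp: W_def)
  have "Poly_Mapping.lookup (partial_pow (Suc r) (Poly_Mapping.single \<beta> (1::'k))) (\<beta> - mp w, w) = 1"
    unfolding pp_formula[OF lb]
    using lookup_sum_single_inj[OF finite_W inj_W wW, where c = "\<lambda>_. (1::'k)"] by simp
  then have "Poly_Mapping.single \<beta> (1::'k) \<notin> S_le r"
    by (auto simp: S_le_def)
  then show ?thesis by blast
qed

end
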